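(* Let $G=(V,E)$ be a $d$-regular undirected graph on $n=|V|$ vertices with $0<d<n$, where $E\subseteq V\times V$ is viewed as a symmetric set of ordered pairs (so $|E|=dn$). Let $g,h\colon V\to V$ be arbitrary functions and let $f=(g,h)\colon V\times V\to V\times V$ be given by $f(u,v)=(g(u),h(v))$. Let $$T=\Pr_{b\xleftarrow{u}\{0,1\}}\big(\mathrm{dec}_G(f(\mathrm{enc}_G(b)))=1-b\big),$$ where the probability is over the uniform choice of $b$ and the randomness of $\mathrm{enc}_G$. Then $$T=\frac12+\frac{1}{2d(n-d)}\sum_{(v,u)\in E}\left(\frac{d\,|g^{-1}(v)|\cdot|h^{-1}(u)|}{n}-\big|E\big(g^{-1}(v),h^{-1}(u)\big)\big|\right).$$
   Context: For subsets $S,T\subseteq V$, $E(S,T)=\{(v,u)\in S\times T : (v,u)\in E\}$ (directed edges from $S$ to $T$). The graph code $(\mathrm{enc}_G,\mathrm{dec}_G)$ of $G$ consists of a randomized map $\mathrm{enc}_G\colon\{0,1\}\to V\times V$ and a deterministic map $\mathrm{dec}_G\colon V\times V\to\{0,1\}$: $\mathrm{enc}_G(0)$ is a uniformly random pair $(u,v)\in (V\times V)\setminus E$, $\mathrm{enc}_G(1)$ is a uniformly random pair $(u,v)\in E$, and $\mathrm{dec}_G(v_1,v_2)=1$ if $(v_1,v_2)\in E$ and $0$ otherwise. *)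

theory Defs
  imports "HOL-Probability.Probability"
begin

definition edges_between :: "('a \<times> 'a) set \<Rightarrow> 'a set \<Rightarrow> 'a set \<Rightarrow> ('a \<times> 'a) set" where
  "edges_between E S T = {(v,u) \<in> S \<times> T. (v,u) \<in> E}"

definition enc_G :: "'a set \<Rightarrow> ('a \<times> 'a) set \<Rightarrow> nat \<Rightarrow> ('a \<times> 'a) pmf" where
  "enc_G V E b = (if b = 0 then pmf_of_set ((V \<times> V) - E) else pmf_of_set E)"

definition dec_G :: "('a \<times> 'a) set \<Rightarrow> 'a \<times> 'a \<Rightarrow> nat" where
  "dec_G E p = (if p \<in> E then 1 else 0)"

definition preim :: "'a set \<Rightarrow> ('a \<Rightarrow> 'a) \<Rightarrow> 'a \<Rightarrow> 'a set" where
  "preim V g v = {u \<in> V. g u = v}"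

end

theory Submission
  imports Defs
begin

lemma prob_split:
  fixes F :: "nat \<Rightarrow> 'b pmf"
  assumes "\<And>b. finite (set_pmf (F b))"
  shows "measure_pmf.prob (pmf_of_set {0::nat,1} \<bind> F) S = (measure_pmf.prob (F 0) S + measure_pmf.prob (F 1) S) / 2"
proof -
  have "measure_pmf.prob (pmf_of_set {0::nat,1} \<bind> F) S = measure_pmf.expectation (pmf_of_set {0::nat,1} \<bind> F) (indicator S)"
    by simp
  also have "\<dots> = (\<Sum>a\<in>{0::nat,1}. measure_pmf.expectation (F a) (indicator S) /\<^sub>R real (card {0::nat,1}))"
    by (rule pmf_expectation_bind_pmf_of_set) (auto simp: assms)
  also have "\<dots> = (measure_pmf.prob (F 0) S + measure_pmf.prob (F 1) S) / 2"
    by (simp add: add_divide_distrib)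
  finally show ?thesis .
qed

lemma prob_map:
  "measure_pmf.prob (p \<bind> (\<lambda>x. return_pmf (b, x))) S = measure_pmf.prob p {x. (b,x) \<in> S}"
proof -
  have "p \<bind> (\<lambda>x. return_pmf (b, x)) = map_pmf (Pair b) p" by (simp add: map_pmf_def)
  then show ?thesis by (simp add: vimage_def)
qed

lemma card_fibers:
  assumes "finite S" "finite E"
  shows "card {x\<in>S. f x \<in> E} = (\<Sum>p\<in>E. card {x\<in>S. f x = p})"
proof -
  have "{x\<in>S. f x \<in> E} = (\<Union>p\<in>E. {x\<in>S. f x = p})" by auto
  then show ?thesis using assms by (simp add: card_UN_disjoint disjoint_iff)
qed

theorem proposition3p2:
  fixes V :: "'a set" and E :: "('a \<times> 'a) set" and d n :: nat and g h :: "'a \<Rightarrow> 'a"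
  assumes finV: "finite V"
    and n_def: "n = card V"
    and E_sub: "E \<subseteq> V \<times> V"
    and E_sym: "\<And>u v. (u, v) \<in> E \<Longrightarrow> (v, u) \<in> E"
    and regular: "\<And>v. v \<in> V \<Longrightarrow> card {u \<in> V. (v, u) \<in> E} = d"
    and d_pos: "0 < d" and d_lt: "d < n"
    and g_maps: "g ` V \<subseteq> V" and h_maps: "h ` V \<subseteq> V"
  shows "measure_pmf.prob
           (do { b \<leftarrow> pmf_of_set {0::nat, 1};
                 x \<leftarrow> enc_G V E b;
                 return_pmf (b, x) })
           {(b, x). dec_G E ((\<lambda>(u, v). (g u, h v)) x) = 1 - b}
       = 1/2 + 1 / (2 * real d * real (n - d)) *
           (\<Sum>(v, u)\<in>E. real d * real (card (preim V g v)) * real (card (preim V h u)) / real n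
                         - real (card (edges_between E (preim V g v) (preim V h u))))"
proof -
  define f where "f = (\<lambda>(u::'a, v::'a). (g u, h v))"
  define S where "S = {(b, x). dec_G E ((\<lambda>(u, v). (g u, h v)) x) = 1 - b}"
  have finE: "finite E" using E_sub finV finite_subset by blast
  have finVV: "finite (V \<times> V)" using finV by simp
  have ES: "E = Sigma V (\<lambda>v. {u \<in> V. (v, u) \<in> E})" using E_sub by auto
  have cE: "card E = d * n"
    by (subst ES, subst card_SigmaI) (auto simp: finV regular n_def)
  have cC: "card (V \<times> V - E) = n * n - d * n"
    using E_sub finE by (simp add: card_Diff_subset card_cartesian_product n_def cE)
  have Ene: "E \<noteq> {}" using cE d_pos d_lt by auto
  have Cne: "V \<times> V - E \<noteq> {}"
  proof
    assume "V \<times> V - E = {}"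
    then have "n * n - d * n = 0" using cC by (metis card.empty)
    moreover have "d * n < n * n" using d_lt by simp
    ultimately show False by simp
  qed
  define A where "A = card {x\<in>V \<times> V. f x \<in> E}"
  define B where "B = card {x\<in>E. f x \<in> E}"
  have A_sum: "real A = (\<Sum>(v, u)\<in>E. real (card (preim V g v)) * real (card (preim V h u)))"
  proof -
    have "A = (\<Sum>p\<in>E. card {x\<in>V \<times> V. f x = p})" unfolding A_def
      by (rule card_fibers[OF finVV finE])
    also have "\<dots> = (\<Sum>(v, u)\<in>E. card (preim V g v) * card (preim V h u))"
    proof (rule sum.cong[OF refl], clarify)
      fix v u
      have "{x\<in>V \<times> V. f x = (v, u)} = preim V g v \<times> preim V h u"
        by (auto simp: f_def preim_def)
      then show "card {x\<in>V \<times> V. f x = (v, u)} = card (preim V g v) * card (preim V h u)"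
        by (simp add: card_cartesian_product)
    qed
    finally show ?thesis by (simp add: case_prod_beta)
  qed
  have B_sum: "real B = (\<Sum>(v, u)\<in>E. real (card (edges_between E (preim V g v) (preim V h u))))"
  proof -
    have "B = (\<Sum>p\<in>E. card {x\<in>E. f x = p})" unfolding B_def
      by (rule card_fibers[OF finE finE])
    also have "\<dots> = (\<Sum>(v, u)\<in>E. card (edges_between E (preim V g v) (preim V h u)))"
    proof (rule sum.cong[OF refl], clarify)
      fix v u
      have "{x\<in>E. f x = (v, u)} = edges_between E (preim V g v) (preim V h u)"
        using E_sub by (auto simp: f_def preim_def edges_between_def)
      then show "card {x\<in>E. f x = (v, u)} = card (edges_between E (preim V g v) (preim V h u))"
        by simp
    qed
    finally show ?thesis by (simp add: case_prod_beta)
  qed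
  have BA: "B \<le> A" unfolding A_def B_def
    by (rule card_mono) (use finVV E_sub in auto)
  have BE: "B \<le> d * n" unfolding B_def cE[symmetric] by (rule card_mono[OF finE]) auto
  have s0: "{x. (0::nat, x) \<in> S} = {x. f x \<in> E}"
    by (auto simp: S_def f_def dec_G_def)
  have s1: "{x. (1::nat, x) \<in> S} = {x. f x \<notin> E}"
    by (auto simp: S_def f_def dec_G_def)
  have c0: "(V \<times> V - E) \<inter> {x. f x \<in> E} = {x\<in>V \<times> V. f x \<in> E} - {x\<in>E. f x \<in> E}" by auto
  have c1: "E \<inter> {x. f x \<notin> E} = E - {x\<in>E. f x \<in> E}" by auto
  have cd0: "card ({x\<in>V \<times> V. f x \<in> E} - {x\<in>E. f x \<in> E}) = A - B"
    unfolding A_def B_def by (rule card_Diff_subset) (use finE E_sub in auto)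
  have cd1: "card (E - {x\<in>E. f x \<in> E}) = d * n - B"
    unfolding B_def cE[symmetric] by (rule card_Diff_subset) (use finE in auto)
  have finC: "finite (V \<times> V - E)" using finVV by simp
  have p0: "measure_pmf.prob (enc_G V E 0) {x. f x \<in> E} = real (A - B) / real (n * n - d * n)"
    unfolding enc_G_def using finVV finE Cne
    by (simp only: simp_thms if_True measure_pmf_of_set[OF Cne finC] c0 cd0 cC)
  have p1: "measure_pmf.prob (enc_G V E 1) {x. f x \<notin> E} = real (d * n - B) / real (d * n)"
    unfolding enc_G_def using finE Ene
    by (simp only: simp_thms if_False one_neq_zero measure_pmf_of_set[OF Ene finE] c1 cd1 cE)
  have fin_enc: "finite (set_pmf (enc_G V E b))" for b
    unfolding enc_G_def using finVV finE Cne Ene by auto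
  have "measure_pmf.prob (pmf_of_set {0::nat, 1} \<bind> (\<lambda>b. enc_G V E b \<bind> (\<lambda>x. return_pmf (b, x)))) S
     = (measure_pmf.prob (enc_G V E 0) {x. f x \<in> E} + measure_pmf.prob (enc_G V E 1) {x. f x \<notin> E}) / 2"
    by (subst prob_split) (auto simp: prob_map s0 s1 s1[simplified] fin_enc)
  also have "\<dots> = (real (A - B) / real (n * n - d * n) + real (d * n - B) / real (d * n)) / 2"
    by (simp only: p0 p1)
  also have "\<dots> = 1/2 + 1 / (2 * real d * real (n - d)) * (real d * real A / real n - real B)"
  proof -
    have n0: "real n > 0" "real d > 0" "real n - real d > 0" using d_pos d_lt by auto
    have e1: "real (A - B) = real A - real B" using BA by simp
    have e2: "real (d * n - B) = real d * real n - real B" using BE by simp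
    have e3: "real (n * n - d * n) = real n * (real n - real d)"
      using d_lt by (simp add: of_nat_diff algebra_simps)
    have e4: "real (n - d) = real n - real d" using d_lt by simp
    show ?thesis unfolding e1 e2 e3 e4 using n0
      by (simp add: field_simps)
  qed
  also have "real d * real A / real n - real B = (\<Sum>(v, u)\<in>E. real d * real (card (preim V g v)) * real (card (preim V h u)) / real n
                         - real (card (edges_between E (preim V g v) (preim V h u))))"
    unfolding A_sum B_sum sum_subtractf[symmetric] sum_distrib_left sum_divide_distrib
    by (rule sum.cong) (auto simp: algebra_simps)
  finally show ?thesis unfolding S_def by simp
qed
end
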